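(* Let $0<\varepsilon\le 0.1$, let $\Box$ be a closed axis-parallel square of side length $\varepsilon$ with center $o$, and let $R\subseteq\Box$ be a nonempty circular domain. For every non-vertex point $p\in\partial(R\oplus D)$, $\big|\mathsf{ang}(\overrightarrow{op},\mathsf{tan}_p)-\tfrac{\pi}{2}\big|\le 4\varepsilon$.
   Context: A circular arc is a connected portion of a circle in $\mathbb{R}^2$ (segments included). A circular domain is a closed subset of $\mathbb{R}^2$ whose boundary consists of finitely many circular arcs intersecting only at their endpoints (finite point sets are also allowed). $D$ is the closed unit disk centered at the origin and $\oplus$ denotes Minkowski sum. $\partial(R\oplus D)$ is a simple closed curve consisting of circular arcs, and each ray from $o$ meets it exactly once. A non-vertex point of $\partial(R\oplus D)$ is a point in the relative interior of one of its boundary arcs; at such a point $p$ the tangent line is unique, and the clockwise tangent $\mathsf{tan}_p$ is the unit vector along this tangent line such that moving $p$ along $\partial(R\oplus D)$ in direction $\mathsf{tan}_p$ rotates $\overrightarrow{op}$ clockwise. For nonzero vectors $\vec u,\vec v$, $\mathsf{ang}(\vec u,\vec v)\in[0,2\pi)$ is the clockwise ordered angle from $\vec u$ to $\vec v$ (the angle swept when rotating $\vec u$ clockwise until it points in the direction of $\vec v$). *)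

theory Defs
  imports "HOL-Analysis.Analysis"
begin

text \<open>The plane R^2 is modelled by the complex numbers.\<close>

definition round_arc :: "complex \<Rightarrow> real \<Rightarrow> real \<Rightarrow> real \<Rightarrow> complex set" where
  "round_arc c r th phi = (\<lambda>s. c + complex_of_real r * cis (th + s)) ` {0..phi}"

text \<open>A circular arc A with endpoints p and q (line segments included; a full circle
  has coinciding endpoints).\<close>
definition circ_arc :: "complex set \<Rightarrow> complex \<Rightarrow> complex \<Rightarrow> bool" where
  "circ_arc A p q \<longleftrightarrow>
     (\<exists>a b. a \<noteq> b \<and> A = closed_segment a b \<and> {p, q} = {a, b}) \<or>
     (\<exists>c r th phi. 0 < r \<and> 0 < phi \<and> phi \<le> 2 * pi \<and> A = round_arc c r th phi \<and>
        p = c + complex_of_real r * cis th \<and> q = c + complex_of_real r * cis (th + phi))"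

definition circular_domain :: "complex set \<Rightarrow> bool" where
  "circular_domain R \<longleftrightarrow> closed R \<and>
     (\<exists>Arcs :: (complex set \<times> complex \<times> complex) set. \<exists>P :: complex set.
        finite Arcs \<and> finite P \<and>
        (\<forall>(A, p, q) \<in> Arcs. circ_arc A p q) \<and>
        (\<forall>(A, p, q) \<in> Arcs. \<forall>(B, p', q') \<in> Arcs. A \<noteq> B \<longrightarrow> A \<inter> B \<subseteq> {p, q} \<inter> {p', q'}) \<and>
        frontier R = (\<Union>(A, p, q) \<in> Arcs. A) \<union> P)"

definition minkowski_sum :: "complex set \<Rightarrow> complex set \<Rightarrow> complex set" where
  "minkowski_sum A B = {a + b | a b. a \<in> A \<and> b \<in> B}"

definition axis_square :: "complex \<Rightarrow> real \<Rightarrow> complex set" where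
  "axis_square z e = {x. \<bar>Re x - Re z\<bar> \<le> e / 2 \<and> \<bar>Im x - Im z\<bar> \<le> e / 2}"

definition arc_tangent_at :: "complex set \<Rightarrow> complex \<Rightarrow> complex \<Rightarrow> bool" where
  "arc_tangent_at S p t \<longleftrightarrow> (\<exists>e>0.
     (\<exists>a b. a \<noteq> b \<and> p \<in> open_segment a b \<and>
        S \<inter> ball p e = closed_segment a b \<inter> ball p e \<and>
        (\<exists>k::real. t = complex_of_real k * (b - a))) \<or>
     (\<exists>c r th phi s. 0 < r \<and> 0 < phi \<and> phi \<le> 2 * pi \<and> 0 < s \<and> s < phi \<and>
        p = c + complex_of_real r * cis (th + s) \<and>
        S \<inter> ball p e = round_arc c r th phi \<inter> ball p e \<and>
        (\<exists>k::real. t = complex_of_real k * \<i> * (p - c))))"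

definition non_vertex :: "complex set \<Rightarrow> complex \<Rightarrow> bool" where
  "non_vertex S p \<longleftrightarrow> p \<in> S \<and> (\<exists>t. t \<noteq> 0 \<and> arc_tangent_at S p t)"

text \<open>Clockwise tangent at p w.r.t. centre z: unit tangent vector such that moving p in
  direction t rotates the vector from z to p clockwise.\<close>
definition clockwise_tangent :: "complex set \<Rightarrow> complex \<Rightarrow> complex \<Rightarrow> complex \<Rightarrow> bool" where
  "clockwise_tangent S z p t \<longleftrightarrow> norm t = 1 \<and> arc_tangent_at S p t \<and> Im (cnj (p - z) * t) < 0"

definition ang :: "complex \<Rightarrow> complex \<Rightarrow> real" where
  "ang u v = (THE a. 0 \<le> a \<and> a < 2 * pi \<and> sgn v = cis (- a) * sgn u)"

end

theory Submission
  imports Defs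
begin

lemma perp_mult:
  assumes "norm w = 1" "d \<noteq> 0" "Re (cnj w * d) = 0"
  shows "\<exists>k::real. - \<i> * w = complex_of_real k * d"
proof -
  define \<mu> where "\<mu> = Im (cnj w * d)"
  have 1: "cnj w * d = \<i> * complex_of_real \<mu>" using assms(3) by (simp add: complex_eq_iff \<mu>_def)
  have 2: "w * cnj w = 1" using assms(1) complex_norm_square[of w] by simp
  have 3: "d = \<i> * complex_of_real \<mu> * w"
  proof -
    have "d = (w * cnj w) * d" using 2 by simp
    also have "\<dots> = w * (cnj w * d)" by (simp add: algebra_simps)
    also have "\<dots> = w * (\<i> * complex_of_real \<mu>)" using 1 by simp
    finally show ?thesis by (simp add: algebra_simps)
  qed
  have "\<mu> \<noteq> 0" using 3 assms(2) by auto
  then have "- \<i> * w = complex_of_real (-1/\<mu>) * d" using 3 by (simp add: field_simps)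
  then show ?thesis by blast
qed

lemma tangent_perp:
  assumes "arc_tangent_at S p t0" "\<forall>x\<in>S. 1 \<le> norm (x - r)" "norm (p - r) = 1"
  shows "arc_tangent_at S p (- \<i> * (p - r))"
proof -
  obtain e where e: "e > 0" and disj: "(\<exists>a b. a \<noteq> b \<and> p \<in> open_segment a b \<and>
        S \<inter> ball p e = closed_segment a b \<inter> ball p e \<and>
        (\<exists>k::real. t0 = complex_of_real k * (b - a))) \<or>
     (\<exists>c r th phi s. 0 < r \<and> 0 < phi \<and> phi \<le> 2 * pi \<and> 0 < s \<and> s < phi \<and>
        p = c + complex_of_real r * cis (th + s) \<and>
        S \<inter> ball p e = round_arc c r th phi \<inter> ball p e \<and>
        (\<exists>k::real. t0 = complex_of_real k * \<i> * (p - c)))"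
    using assms(1) unfolding arc_tangent_at_def by blast
  from disj show ?thesis
  proof
    assume "\<exists>a b. a \<noteq> b \<and> p \<in> open_segment a b \<and>
        S \<inter> ball p e = closed_segment a b \<inter> ball p e \<and>
        (\<exists>k::real. t0 = complex_of_real k * (b - a))"
    then obtain a b where ab: "a \<noteq> b" "p \<in> open_segment a b"
        "S \<inter> ball p e = closed_segment a b \<inter> ball p e" by blast
    obtain u where u: "0 < u" "u < 1" "p = (1 - u) *\<^sub>R a + u *\<^sub>R b"
      using ab(2) by (auto simp: in_segment)
    define g where "g s = (1 - s) *\<^sub>R a + s *\<^sub>R b" for s
    define f where "f s = (Re (g s) - Re r)^2 + (Im (g s) - Im r)^2" for s
    have fn: "f s = (norm (g s - r))^2" for s by (simp add: f_def cmod_power2)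
    define d where "d = min (min u (1-u)) (e / norm (b - a))"
    have nba: "norm (b - a) > 0" using ab(1) by simp
    have d: "d > 0" using u e nba by (simp add: d_def)
    have "\<forall>s. \<bar>u - s\<bar> < d \<longrightarrow> f u \<le> f s"
    proof (intro allI impI)
      fix s assume s: "\<bar>u - s\<bar> < d"
      have s01: "0 \<le> s" "s \<le> 1" using s by (auto simp: d_def)
      have gs: "g s \<in> closed_segment a b" using s01 by (auto simp: in_segment g_def)
      have "g s - p = (s - u) *\<^sub>R (b - a)" by (simp add: g_def u(3) algebra_simps)
      then have "norm (g s - p) = \<bar>s - u\<bar> * norm (b - a)" by simp
      also have "\<dots> < d * norm (b - a)" using s nba by (simp add: abs_minus_commute)
      also have "\<dots> \<le> (e / norm (b - a)) * norm (b - a)"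
        using nba by (intro mult_right_mono) (auto simp: d_def)
      also have "\<dots> = e" using nba by simp
      finally have "g s \<in> ball p e" by (simp add: dist_norm norm_minus_commute)
      with gs ab(3) have "g s \<in> S" by blast
      then have "1 \<le> norm (g s - r)" using assms(2) by blast
      then have "1 \<le> f s" unfolding fn by (simp add: one_le_power)
      moreover have "f u = 1" unfolding fn using assms(3) u(3) g_def by simp
      ultimately show "f u \<le> f s" by simp
    qed
    moreover have "DERIV f u :> 2 * (Re (g u) - Re r) * (Re b - Re a) + 2 * (Im (g u) - Im r) * (Im b - Im a)"
      unfolding f_def g_def
      by (auto intro!: derivative_eq_intros simp: algebra_simps)
    ultimately have "2 * (Re (g u) - Re r) * (Re b - Re a) + 2 * (Im (g u) - Im r) * (Im b - Im a) = 0"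
      using DERIV_local_min d by blast
    moreover have gu: "g u = p" using u(3) g_def by simp
    ultimately have "(Re p - Re r) * (Re b - Re a) + (Im p - Im r) * (Im b - Im a) = 0" by (simp add: algebra_simps)
    then have "Re (cnj (p - r) * (b - a)) = 0" by (simp add: algebra_simps)
    then obtain k :: real where "- \<i> * (p - r) = complex_of_real k * (b - a)"
      using perp_mult[OF assms(3)] ab(1) by force
    then show ?thesis unfolding arc_tangent_at_def using e ab by blast
  next
    assume "\<exists>c r th phi s. 0 < r \<and> 0 < phi \<and> phi \<le> 2 * pi \<and> 0 < s \<and> s < phi \<and>
        p = c + complex_of_real r * cis (th + s) \<and>
        S \<inter> ball p e = round_arc c r th phi \<inter> ball p e \<and>
        (\<exists>k::real. t0 = complex_of_real k * \<i> * (p - c))"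
    then obtain c \<rho> th phi s0 where arc: "0 < \<rho>" "0 < phi" "phi \<le> 2 * pi" "0 < s0" "s0 < phi"
        "p = c + complex_of_real \<rho> * cis (th + s0)"
        "S \<inter> ball p e = round_arc c \<rho> th phi \<inter> ball p e" by blast
    define g where "g s = c + complex_of_real \<rho> * cis (th + s)" for s
    define f where "f s = (Re (g s) - Re r)^2 + (Im (g s) - Im r)^2" for s
    have fn: "f s = (norm (g s - r))^2" for s by (simp add: f_def cmod_power2)
    have "continuous (at s0) g" unfolding g_def cis_conv_exp by (intro continuous_intros)
    then obtain d1 where d1: "d1 > 0" "\<forall>s. dist s s0 < d1 \<longrightarrow> dist (g s) (g s0) < e"
      using e unfolding continuous_at_eps_delta by blast
    define d where "d = min (min s0 (phi - s0)) d1"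
    have d: "d > 0" using arc d1 by (simp add: d_def)
    have "\<forall>s. \<bar>s0 - s\<bar> < d \<longrightarrow> f s0 \<le> f s"
    proof (intro allI impI)
      fix s assume s: "\<bar>s0 - s\<bar> < d"
      have s01: "0 \<le> s" "s \<le> phi" using s by (auto simp: d_def)
      have gs: "g s \<in> round_arc c \<rho> th phi" using s01 unfolding round_arc_def g_def by auto
      have "dist s s0 < d1" using s by (simp add: d_def dist_real_def abs_minus_commute)
      then have "dist (g s) p < e" using d1 arc(6) g_def by auto
      then have "g s \<in> ball p e" by (simp add: dist_commute)
      with gs arc(7) have "g s \<in> S" by blast
      then have "1 \<le> norm (g s - r)" using assms(2) by blast
      then have "1 \<le> f s" unfolding fn by (simp add: one_le_power)
      moreover have "f s0 = 1" unfolding fn using assms(3) arc(6) g_def by simp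
      ultimately show "f s0 \<le> f s" by simp
    qed
    moreover have "DERIV f s0 :> 2 * (Re (g s0) - Re r) * (- \<rho> * sin (th + s0)) + 2 * (Im (g s0) - Im r) * (\<rho> * cos (th + s0))"
      unfolding f_def g_def
      by (auto intro!: derivative_eq_intros simp: algebra_simps cis.sel)
    ultimately have "2 * (Re (g s0) - Re r) * (- \<rho> * sin (th + s0)) + 2 * (Im (g s0) - Im r) * (\<rho> * cos (th + s0)) = 0"
      using DERIV_local_min d by blast
    moreover have gu: "g s0 = p" using arc(6) g_def by simp
    ultimately have "(Re p - Re r) * (- \<rho> * sin (th + s0)) + (Im p - Im r) * (\<rho> * cos (th + s0)) = 0" by (simp add: algebra_simps)
    moreover have "Re (cnj (p - r) * (\<i> * (p - c))) = (Re p - Re r) * (- \<rho> * sin (th + s0)) + (Im p - Im r) * (\<rho> * cos (th + s0))"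
      using arc(6) by (simp add: algebra_simps cis.sel)
    ultimately have "Re (cnj (p - r) * (\<i> * (p - c))) = 0" by simp
    moreover have "\<i> * (p - c) \<noteq> 0" using arc(1,6) by simp
    ultimately obtain k :: real where "- \<i> * (p - r) = complex_of_real k * (\<i> * (p - c))"
      using perp_mult[OF assms(3)] by force
    then have "- \<i> * (p - r) = complex_of_real k * \<i> * (p - c)" by (simp add: mult.assoc)
    then show ?thesis unfolding arc_tangent_at_def using e arc by blast
  qed
qed

lemma sgn_arctan:
  assumes "Re q > 0"
  shows "sgn q = cis (arctan (Im q / Re q))"
proof -
  define a where "a = Re q"
  define x where "x = Im q / Re q"
  have q: "q = complex_of_real a * (1 + \<i> * complex_of_real x)"
    using assms by (simp add: complex_eq_iff a_def x_def)
  have s: "sqrt (1 + x^2) > 0" by (simp add: add_pos_nonneg)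
  have n: "norm q = a * sqrt (1 + x^2)"
  proof -
    have "norm q = \<bar>a\<bar> * norm (1 + \<i> * complex_of_real x)" unfolding q norm_mult by simp
    moreover have "norm (1 + \<i> * complex_of_real x) = sqrt (1 + x^2)" by (simp add: cmod_def)
    ultimately show ?thesis using assms by (simp add: a_def)
  qed
  have "sgn q = q / complex_of_real (norm q)" by (simp add: sgn_div_norm divide_inverse scaleR_conv_of_real mult.commute)
  also have "\<dots> = q / (complex_of_real a * complex_of_real (sqrt (1 + x^2)))"
    using n by simp
  also have "\<dots> = (complex_of_real a * (1 + \<i> * complex_of_real x)) / (complex_of_real a * complex_of_real (sqrt (1 + x^2)))"
    by (subst q) (rule refl)
  also have "\<dots> = (1 + \<i> * complex_of_real x) / complex_of_real (sqrt (1 + x^2))"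
    using assms by (simp add: a_def)
  also have "\<dots> = cis (arctan x)"
    using s by (simp add: complex_eq_iff cos_arctan sin_arctan)
  finally show ?thesis by (simp add: x_def)
qed

theorem mainTheorem9:
  fixes eps :: real and z :: complex and R :: "complex set" and p :: complex
  assumes "0 < eps" and "eps \<le> 1/10"
    and "R \<noteq> {}" and "circular_domain R" and "R \<subseteq> axis_square z eps"
    and "non_vertex (frontier (minkowski_sum R (cball 0 1))) p"
  shows "\<exists>t. clockwise_tangent (frontier (minkowski_sum R (cball 0 1))) z p t \<and>
             \<bar>ang (p - z) t - pi / 2\<bar> \<le> 4 * eps"
proof -
  define M where "M = minkowski_sum R (cball 0 1)"
  define S where "S = frontier M"
  have bdd: "norm (x - z) \<le> eps" if "x \<in> R" for x
  proof -
    have "\<bar>Re (x - z)\<bar> \<le> eps/2" "\<bar>Im (x - z)\<bar> \<le> eps/2"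
      using assms(5) that by (auto simp: axis_square_def)
    then show ?thesis using cmod_le[of "x - z"] by simp
  qed
  have "R \<subseteq> cball z eps" using bdd by (auto simp: dist_norm norm_minus_commute)
  then have "bounded R" using bounded_cball bounded_subset by blast
  moreover have "closed R" using assms(4) by (simp add: circular_domain_def)
  ultimately have "compact R" by (simp add: compact_eq_bounded_closed)
  then have "compact M" unfolding M_def minkowski_sum_def by (intro compact_sums) auto
  then have cM: "closed M" by (simp add: compact_imp_closed)
  have pS: "p \<in> S" using assms(6) by (simp add: non_vertex_def S_def M_def)
  obtain t0 where t0: "arc_tangent_at S p t0" using assms(6) by (auto simp: non_vertex_def S_def M_def)
  have "p \<in> M" using pS cM frontier_subset_closed unfolding S_def by blast
  then obtain r b where rb: "r \<in> R" "norm b \<le> 1" "p = r + b" unfolding M_def minkowski_sum_def by auto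
  have "ball r 1 \<subseteq> M"
  proof
    fix x assume "x \<in> ball r 1"
    then have "norm (x - r) \<le> 1" by (simp add: dist_norm norm_minus_commute)
    then have "x - r \<in> cball 0 1" by simp
    then show "x \<in> M" unfolding M_def minkowski_sum_def using rb(1)
      by (intro CollectI exI[of _ r] exI[of _ "x - r"]) auto
  qed
  then have "ball r 1 \<subseteq> interior M" by (simp add: interior_maximal)
  then have far: "\<forall>x\<in>S. 1 \<le> norm (x - r)"
  proof (intro ballI)
    fix x assume "x \<in> S"
    then have "x \<notin> interior M" by (simp add: S_def frontier_def)
    then have "x \<notin> ball r 1" using \<open>ball r 1 \<subseteq> interior M\<close> by blast
    then show "1 \<le> norm (x - r)" by (simp add: dist_norm norm_minus_commute)
  qed
  have nw: "norm (p - r) = 1" using far pS rb by force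
  define w where "w = p - r"
  define t where "t = - \<i> * w"
  have tan: "arc_tangent_at S p t" unfolding t_def w_def using tangent_perp[OF t0 far nw] .
  have ww: "cnj w * w = 1" using nw complex_norm_square[of w] by (simp add: w_def mult.commute)
  define v where "v = (r - z) * cnj w"
  define q where "q = 1 + v"
  have "q * w = w + (r - z) * (cnj w * w)" by (simp add: q_def v_def algebra_simps)
  then have pz: "p - z = q * w" using ww by (simp add: w_def)
  have nv: "norm v \<le> eps" unfolding v_def norm_mult complex_mod_cnj using bdd[OF rb(1)] nw by (simp add: w_def)
  have Req: "Re q \<ge> 1 - eps" using abs_Re_le_cmod[of v] nv by (simp add: q_def)
  have Imq: "\<bar>Im q\<bar> \<le> eps" using abs_Im_le_cmod[of v] nv by (simp add: q_def)
  have Rq0: "Re q > 0" using Req assms(2) by simp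
  have nt: "norm t = 1" using nw by (simp add: t_def w_def norm_mult)
  have "cnj (p - z) * t = - \<i> * cnj q * (cnj w * w)" unfolding pz t_def by (simp add: algebra_simps)
  then have "Im (cnj (p - z) * t) = - Re q" using ww by simp
  then have cw: "clockwise_tangent S z p t" unfolding clockwise_tangent_def using nt tan Rq0 by simp
  define \<beta> where "\<beta> = arctan (Im q / Re q)"
  have sq: "sgn q = cis \<beta>" using sgn_arctan[OF Rq0] by (simp add: \<beta>_def)
  have sw: "sgn w = w" using nw by (simp add: sgn_div_norm w_def)
  have sgnpz: "sgn (p - z) = cis \<beta> * w" unfolding pz sgn_mult sq sw ..
  have sgnt: "sgn t = - \<i> * w" using nt by (simp add: sgn_div_norm t_def)
  have bb: "- (pi/2) < \<beta>" "\<beta> < pi/2" using arctan_bounded by (auto simp: \<beta>_def)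
  have w0: "w \<noteq> 0" using nw by (auto simp: w_def)
  have key: "cis (- (pi/2 + \<beta>)) * cis \<beta> = - \<i>"
    by (simp add: cis_mult complex_eq_iff)
  have ang: "ang (p - z) t = pi/2 + \<beta>"
    unfolding ang_def
  proof (rule the_equality)
    show "0 \<le> pi/2 + \<beta> \<and> pi/2 + \<beta> < 2 * pi \<and> sgn t = cis (- (pi/2 + \<beta>)) * sgn (p - z)"
      using bb key unfolding sgnt sgnpz by (simp add: mult.assoc[symmetric])
  next
    fix a assume a: "0 \<le> a \<and> a < 2 * pi \<and> sgn t = cis (- a) * sgn (p - z)"
    then have "cis (- a) * cis \<beta> * w = cis (- (pi/2 + \<beta>)) * cis \<beta> * w"
      using key unfolding sgnt sgnpz by (simp add: mult.assoc)
    then have "cis (- a) = cis (- (pi/2 + \<beta>))" using w0 by simp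
    then have "cis (pi/2 + \<beta>) * cis (- a) = cis (pi/2 + \<beta>) * cis (- (pi/2 + \<beta>))" by simp
    then have "cis ((pi/2 + \<beta>) - a) = 1" by (simp only: cis_mult) simp
    then have "cos ((pi/2 + \<beta>) - a) = 1" by (metis cis.sel(1) one_complex.sel(1))
    then obtain n :: int where n: "(pi/2 + \<beta>) - a = real_of_int n * 2 * pi" using cos_one_2pi_int by blast
    have "\<bar>real_of_int n\<bar> * (2 * pi) < 1 * (2 * pi)"
    proof -
      have "\<bar>(pi/2 + \<beta>) - a\<bar> < 2 * pi" using a bb by auto
      then show ?thesis using n by (simp add: abs_mult)
    qed
    then have "\<bar>real_of_int n\<bar> < 1" using pi_gt_zero by (simp only: mult_less_cancel_right)
    then have "n = 0" by linarith
    then show "a = pi/2 + \<beta>" using n by simp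
  qed
  have "\<bar>\<beta>\<bar> \<le> \<bar>Im q / Re q\<bar>" unfolding \<beta>_def by (rule abs_arctan_le)
  also have "\<dots> = \<bar>Im q\<bar> / Re q" using Rq0 by (simp add: abs_divide)
  also have "\<dots> \<le> eps / (9/10)"
    using Imq Req assms(2) Rq0 by (intro frac_le) auto
  also have "\<dots> \<le> 4 * eps" using assms(1) by simp
  finally have "\<bar>ang (p - z) t - pi / 2\<bar> \<le> 4 * eps" using ang by simp
  then show ?thesis using cw unfolding S_def M_def by blast
qed

end
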